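(* Let $F$ be a field without maximal subrings and $D$ a non-commutative division ring with center $F$. If $R$ is a maximal subring of $D$, then $F\subseteq R$.
   Context: All rings are associative unital and subrings share the identity. A maximal subring of a ring $T$ is a proper subring maximal under inclusion among proper subrings of $T$. *)

theory Defs
  imports Main
begin

definition is_subring :: "'a::ring_1 set \<Rightarrow> 'a set \<Rightarrow> bool" where
  "is_subring S T \<longleftrightarrow> S \<subseteq> T \<and> 1 \<in> S \<and>
     (\<forall>x\<in>S. \<forall>y\<in>S. x + y \<in> S \<and> x * y \<in> S) \<and> (\<forall>x\<in>S. - x \<in> S)"

definition maximal_subring :: "'a::ring_1 set \<Rightarrow> 'a set \<Rightarrow> bool" where
  "maximal_subring S T \<longleftrightarrow> is_subring S T \<and> S \<noteq> T \<and>
     (\<forall>U. is_subring U T \<and> S \<subseteq> U \<and> U \<noteq> T \<longrightarrow> U = S)"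

definition ring_center :: "'a::ring_1 set" where
  "ring_center = {x. \<forall>y. x * y = y * x}"

end

theory Submission
  imports Defs
begin


lemma rc_iff: "x \<in> (ring_center::'a::ring_1 set) \<longleftrightarrow> (\<forall>y. x*y = y*x)"
  by (simp add: ring_center_def)

lemma rc_comm: "x \<in> (ring_center::'a::ring_1 set) \<Longrightarrow> x*y = y*x"
  by (simp add: ring_center_def)

lemma rc_one: "1 \<in> (ring_center::'a::ring_1 set)" by (simp add: rc_iff)
lemma rc_zero: "0 \<in> (ring_center::'a::ring_1 set)" by (simp add: rc_iff)
lemma rc_add: "x \<in> ring_center \<Longrightarrow> y \<in> ring_center \<Longrightarrow> x + y \<in> (ring_center::'a::ring_1 set)"
  by (simp add: rc_iff algebra_simps)
lemma rc_uminus: "x \<in> ring_center \<Longrightarrow> - x \<in> (ring_center::'a::ring_1 set)"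
  by (simp add: rc_iff)
lemma rc_diff: "x \<in> ring_center \<Longrightarrow> y \<in> ring_center \<Longrightarrow> x - y \<in> (ring_center::'a::ring_1 set)"
  by (simp add: rc_iff algebra_simps)
lemma rc_mult: "x \<in> ring_center \<Longrightarrow> y \<in> ring_center \<Longrightarrow> x * y \<in> (ring_center::'a::ring_1 set)"
  unfolding rc_iff by (metis mult.assoc)
lemma rc_power: "x \<in> ring_center \<Longrightarrow> x ^ n \<in> (ring_center::'a::ring_1 set)"
  by (induct n) (simp_all add: rc_mult rc_one)
lemma rc_inverse: "x \<in> ring_center \<Longrightarrow> inverse x \<in> (ring_center::'a::division_ring set)"
proof (cases "x = 0")
  case True then show ?thesis by (simp add: rc_zero)
next
  case False
  assume x: "x \<in> ring_center"
  show ?thesis unfolding rc_iff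
  proof
    fix y
    have "inverse x * y = inverse x * (y * x) * inverse x"
      using False by (simp add: mult.assoc)
    also have "\<dots> = inverse x * (x * y) * inverse x" using rc_comm[OF x, of y] by simp
    also have "\<dots> = y * inverse x" using False by (simp add: mult.assoc[symmetric])
    finally show "inverse x * y = y * inverse x" .
  qed
qed

lemma subringD:
  assumes "is_subring S T"
  shows "S \<subseteq> T" "1 \<in> S" "\<And>x y. x \<in> S \<Longrightarrow> y \<in> S \<Longrightarrow> x + y \<in> S"
    "\<And>x y. x \<in> S \<Longrightarrow> y \<in> S \<Longrightarrow> x * y \<in> S" "\<And>x. x \<in> S \<Longrightarrow> - x \<in> S"
  using assms by (auto simp: is_subring_def)

lemma subring_zero: "is_subring S T \<Longrightarrow> 0 \<in> S"
proof -
  assume a: "is_subring S T"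
  have "1 + - 1 \<in> S" using subringD(2,3,5)[OF a] by blast
  then show ?thesis by simp
qed

lemma subring_diff: assumes "is_subring S T" "x \<in> S" "y \<in> S" shows "x - y \<in> S"
proof -
  have "x + - y \<in> S" using subringD(3)[OF assms(1) assms(2) subringD(5)[OF assms(1) assms(3)]] .
  then show ?thesis by simp
qed

lemma subring_power: assumes "is_subring S T" "x \<in> S" shows "x ^ n \<in> S"
proof (induct n)
  case 0 then show ?case using subringD(2)[OF assms(1)] by simp
next
  case (Suc n) then show ?case using subringD(4)[OF assms(1) assms(2) Suc] by simp
qed

lemma subring_sum: assumes "is_subring S T" shows "(\<And>i. i \<in> A \<Longrightarrow> f i \<in> S) \<Longrightarrow> sum f A \<in> S"
proof (induct A rule: infinite_finite_induct)
  case (infinite A) then show ?case using subring_zero[OF assms] by simp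
next
  case empty then show ?case using subring_zero[OF assms] by simp
next
  case (insert x F)
  have "f x + sum f F \<in> S" using subringD(3)[OF assms] insert by simp
  then show ?case using insert by simp
qed

lemma zorn_max:
  fixes F S :: "'a::ring_1 set"
  assumes S: "is_subring S F" and t: "t \<in> F" "t \<notin> S"
    and gen: "\<And>W. is_subring W F \<Longrightarrow> S \<subseteq> W \<Longrightarrow> t \<in> W \<Longrightarrow> W = F"
  shows "\<exists>M. maximal_subring M F"
proof -
  let ?A = "{W. is_subring W F \<and> S \<subseteq> W \<and> t \<notin> W}"
  have ne: "?A \<noteq> {}" using S t by auto
  have "\<exists>M\<in>?A. \<forall>X\<in>?A. M \<subseteq> X \<longrightarrow> X = M"
  proof (rule subset_Zorn_nonempty[OF ne])
    fix C assume C: "C \<noteq> {}" "subset.chain ?A C"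
    hence CA: "C \<subseteq> ?A" and ch: "\<And>X Y. X \<in> C \<Longrightarrow> Y \<in> C \<Longrightarrow> X \<subseteq> Y \<or> Y \<subseteq> X"
      by (auto simp: subset.chain_def)
    obtain W0 where W0: "W0 \<in> C" using C by auto
    have sub: "is_subring (\<Union>C) F"
      unfolding is_subring_def
    proof (intro conjI ballI)
      show "\<Union>C \<subseteq> F" using CA by (auto simp: is_subring_def)
      show "1 \<in> \<Union>C" using W0 CA by (auto simp: is_subring_def)
    next
      fix x assume "x \<in> \<Union>C"
      then obtain X where "X \<in> C" "x \<in> X" by auto
      then show "- x \<in> \<Union>C" using CA by (auto simp: is_subring_def)
    next
      fix x y assume "x \<in> \<Union>C" "y \<in> \<Union>C"
      then obtain X Y where XY: "X \<in> C" "x \<in> X" "Y \<in> C" "y \<in> Y" by auto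
      then have "\<exists>Z\<in>C. x \<in> Z \<and> y \<in> Z" using ch[of X Y] by auto
      then obtain Z where Z: "Z \<in> C" "x \<in> Z" "y \<in> Z" by auto
      then have "is_subring Z F" using CA by auto
      then show "x + y \<in> \<Union>C" "x * y \<in> \<Union>C" using Z by (auto simp: is_subring_def)
    qed
    have "S \<subseteq> \<Union>C" using W0 CA by blast
    moreover have "t \<notin> \<Union>C" using CA by blast
    ultimately show "\<Union>C \<in> ?A" using sub by simp
  qed
  then obtain M where M: "M \<in> ?A" and Mmax: "\<forall>X\<in>?A. M \<subseteq> X \<longrightarrow> X = M" by (rule bexE)
  have MS: "is_subring M F" "S \<subseteq> M" "t \<notin> M" using M by simp_all
  have "maximal_subring M F"
    unfolding maximal_subring_def
  proof (intro conjI allI impI)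
    show "is_subring M F" using MS by simp
    show "M \<noteq> F" using MS t by auto
  next
    fix U assume U: "is_subring U F \<and> M \<subseteq> U \<and> U \<noteq> F"
    have "t \<notin> U"
    proof
      assume "t \<in> U"
      then have "U = F" using gen[of U] U MS(2) \<open>t \<in> U\<close> by blast
      then show False using U by simp
    qed
    then have "U \<in> ?A" using U MS(2) by blast
    then show "U = M" using Mmax U by simp
  qed
  then show ?thesis by blast
qed



lemma mk_subring:
  assumes "(1::'a::ring_1) \<in> X" "\<And>x y. x \<in> X \<Longrightarrow> y \<in> X \<Longrightarrow> x + y \<in> X"
    "\<And>x y. x \<in> X \<Longrightarrow> y \<in> X \<Longrightarrow> x * y \<in> X" "\<And>x. x \<in> X \<Longrightarrow> - x \<in> X"
  shows "is_subring X UNIV"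
  using assms by (simp add: is_subring_def)

lemma pow_central: "(g::'a::ring_1) \<in> ring_center \<Longrightarrow> (a * g) ^ j = a ^ j * g ^ j"
proof (induct j)
  case 0 then show ?case by simp
next
  case (Suc j)
  have "(a * g) ^ Suc j = a * (g * (a ^ j * g ^ j))" using Suc by (simp add: mult.assoc)
  also have "g * (a ^ j * g ^ j) = a ^ j * (g * g ^ j)"
    using rc_comm[OF Suc.prems, of "a ^ j"] by (simp add: mult.assoc[symmetric])
  finally show ?case by (simp add: mult.assoc)
qed

lemma ext_sum:
  "c = (\<Sum>i<n. s i * f i) \<Longrightarrow> c + x * f n = (\<Sum>i<Suc n. (if i < n then s i else x) * f i)"
  by simp

locale msr =
  fixes R :: "'a::division_ring set"
  assumes max: "maximal_subring R UNIV"
begin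

lemma Rsub: "is_subring R UNIV" using max by (simp add: maximal_subring_def)
lemma RneU: "R \<noteq> UNIV" using max by (simp add: maximal_subring_def)
lemma grow: "is_subring X UNIV \<Longrightarrow> R \<subseteq> X \<Longrightarrow> z \<in> X \<Longrightarrow> z \<notin> R \<Longrightarrow> X = UNIV"
  using max unfolding maximal_subring_def by blast

lemma R_one: "1 \<in> R" using subringD(2)[OF Rsub] .
lemma R_add: "x \<in> R \<Longrightarrow> y \<in> R \<Longrightarrow> x + y \<in> R" using subringD(3)[OF Rsub] .
lemma R_mult: "x \<in> R \<Longrightarrow> y \<in> R \<Longrightarrow> x * y \<in> R" using subringD(4)[OF Rsub] .
lemma R_uminus: "x \<in> R \<Longrightarrow> - x \<in> R" using subringD(5)[OF Rsub] .
lemma R_zero: "0 \<in> R" using subring_zero[OF Rsub] .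
lemma R_diff: "x \<in> R \<Longrightarrow> y \<in> R \<Longrightarrow> x - y \<in> R" using subring_diff[OF Rsub] .
lemma R_power: "x \<in> R \<Longrightarrow> x ^ n \<in> R" using subring_power[OF Rsub] .
lemma R_sum: "(\<And>i. i \<in> A \<Longrightarrow> f i \<in> R) \<Longrightarrow> sum f A \<in> R" using subring_sum[OF Rsub] .

definition P :: "'a \<Rightarrow> 'a set" where
  "P g = {x. \<exists>n r. (\<forall>i. r i \<in> R) \<and> (\<forall>i\<ge>n. r i = 0) \<and> x = (\<Sum>i<n. r i * g ^ i)}"

lemma P_ext: "(\<forall>i\<ge>n. r i = 0) \<Longrightarrow> n \<le> N \<Longrightarrow> (\<Sum>i<N. r i * g ^ i) = (\<Sum>i<n. r i * (g::'a) ^ i)"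
  by (rule sum.mono_neutral_right) (auto simp: not_less)

lemma P_I: "(\<forall>i. r i \<in> R) \<Longrightarrow> (\<forall>i\<ge>n. r i = 0) \<Longrightarrow> x = (\<Sum>i<n. r i * g ^ i) \<Longrightarrow> x \<in> P g"
  unfolding P_def mem_Collect_eq by (rule exI[of _ n], rule exI[of _ r]) simp

lemma P_add: assumes "x \<in> P g" "y \<in> P g" shows "x + y \<in> P g"
proof -
  obtain n r where r: "\<forall>i. r i \<in> R" "\<forall>i\<ge>n. r i = 0" "x = (\<Sum>i<n. r i * g ^ i)"
    using assms(1) unfolding P_def by blast
  obtain m q where q: "\<forall>i. q i \<in> R" "\<forall>i\<ge>m. q i = 0" "y = (\<Sum>i<m. q i * g ^ i)"
    using assms(2) unfolding P_def by blast
  let ?N = "max n m"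
  have "x = (\<Sum>i<?N. r i * g ^ i)" using r P_ext[of n r ?N g] by simp
  moreover have "y = (\<Sum>i<?N. q i * g ^ i)" using q P_ext[of m q ?N g] by simp
  ultimately have "x + y = (\<Sum>i<?N. (r i + q i) * g ^ i)" by (simp add: sum.distrib distrib_right)
  moreover have "\<forall>i. r i + q i \<in> R" using r q R_add by blast
  moreover have "\<forall>i\<ge>?N. r i + q i = 0" using r q by simp
  ultimately show ?thesis by (intro P_I)
qed

lemma P_uminus: assumes "x \<in> P g" shows "- x \<in> P g"
proof -
  obtain n r where r: "\<forall>i. r i \<in> R" "\<forall>i\<ge>n. r i = 0" "x = (\<Sum>i<n. r i * g ^ i)"
    using assms(1) unfolding P_def by blast
  have "- x = (\<Sum>i<n. (- r i) * g ^ i)" using r(3) by (simp add: sum_negf)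
  moreover have "\<forall>i. - r i \<in> R" using r R_uminus by blast
  moreover have "\<forall>i\<ge>n. - r i = 0" using r by simp
  ultimately show ?thesis by (intro P_I)
qed

lemma P_R: assumes "x \<in> R" shows "x \<in> P g"
proof -
  let ?r = "\<lambda>i::nat. if i = 0 then x else 0"
  have "x = (\<Sum>i<1. ?r i * g ^ i)" by simp
  moreover have "\<forall>i. ?r i \<in> R" using assms R_zero by simp
  moreover have "\<forall>i\<ge>1. ?r i = 0" by simp
  ultimately show ?thesis by (intro P_I)
qed

lemma P_g: "g \<in> P g"
proof -
  let ?r = "\<lambda>i::nat. if i = 1 then 1 else 0"
  have "g = (\<Sum>i<Suc (Suc 0). ?r i * g ^ i)" by simp
  moreover have "\<forall>i. ?r i \<in> R" using R_one R_zero by simp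
  moreover have "\<forall>i\<ge>Suc (Suc 0). ?r i = 0" by simp
  ultimately show ?thesis by (intro P_I)
qed

lemma P_mult_g: assumes "x \<in> P g" shows "x * g \<in> P g"
proof -
  obtain n r where r: "\<forall>i. r i \<in> R" "\<forall>i\<ge>n. r i = 0" "x = (\<Sum>i<n. r i * g ^ i)"
    using assms(1) unfolding P_def by blast
  define r' where "r' = (\<lambda>i. if i = 0 then 0 else r (i - 1))"
  have "x * g = (\<Sum>i<n. r i * g ^ Suc i)" using r(3) by (simp add: sum_distrib_right mult.assoc power_commutes)
  also have "\<dots> = r' 0 * g ^ 0 + (\<Sum>i<n. r' (Suc i) * g ^ (Suc i))" by (simp add: r'_def)
  also have "\<dots> = (\<Sum>i<Suc n. r' i * g ^ i)" by (rule sum.lessThan_Suc_shift[symmetric])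
  finally have "x * g = (\<Sum>i<Suc n. r' i * g ^ i)" .
  moreover have "\<forall>i. r' i \<in> R" using r R_zero by (simp add: r'_def)
  moreover have "\<forall>i\<ge>Suc n. r' i = 0" using r by (simp add: r'_def)
  ultimately show ?thesis by (intro P_I)
qed

lemma P_mult_R: assumes "x \<in> P g" "q \<in> R" "g \<in> ring_center" shows "x * q \<in> P g"
proof -
  obtain n r where r: "\<forall>i. r i \<in> R" "\<forall>i\<ge>n. r i = 0" "x = (\<Sum>i<n. r i * g ^ i)"
    using assms(1) unfolding P_def by blast
  have c: "\<And>i. g ^ i * q = q * g ^ i" using rc_comm[OF rc_power[OF assms(3)]] by blast
  have "x * q = (\<Sum>i<n. r i * (g ^ i * q))" using r(3) by (simp add: sum_distrib_right mult.assoc)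
  also have "\<dots> = (\<Sum>i<n. (r i * q) * g ^ i)"
  proof (rule sum.cong)
    fix i show "r i * (g ^ i * q) = (r i * q) * g ^ i" using c[of i] by (simp add: mult.assoc)
  qed simp
  finally have "x * q = (\<Sum>i<n. (r i * q) * g ^ i)" .
  moreover have "\<forall>i. r i * q \<in> R" using r assms(2) R_mult by blast
  moreover have "\<forall>i\<ge>n. r i * q = 0" using r by simp
  ultimately show ?thesis by (intro P_I)
qed

lemma P_mult_gpow: assumes "x \<in> P g" shows "x * g ^ k \<in> P g"
proof (induct k)
  case 0 then show ?case using assms by simp
next
  case (Suc k)
  have "x * g ^ Suc k = (x * g ^ k) * g" by (simp add: mult.assoc power_commutes)
  then show ?case using P_mult_g[OF Suc] by simp
qed

lemma P_zero: "0 \<in> P g" using P_R[OF R_zero] .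

lemma P_sum: "(\<And>i. i \<in> A \<Longrightarrow> f i \<in> P g) \<Longrightarrow> sum f A \<in> P g"
proof (induct A rule: infinite_finite_induct)
  case (infinite A) then show ?case by (simp add: P_zero)
next
  case empty then show ?case by (simp add: P_zero)
next
  case (insert x F) then show ?case by (simp add: P_add)
qed

lemma P_mult: assumes "x \<in> P g" "y \<in> P g" "g \<in> ring_center" shows "x * y \<in> P g"
proof -
  obtain m q where q: "\<forall>i. q i \<in> R" "\<forall>i\<ge>m. q i = 0" "y = (\<Sum>i<m. q i * g ^ i)"
    using assms(2) unfolding P_def by blast
  have "x * y = (\<Sum>i<m. (x * q i) * g ^ i)" using q(3) by (simp add: sum_distrib_left mult.assoc)
  also have "\<dots> \<in> P g"
  proof (rule P_sum)
    fix i show "x * q i * g ^ i \<in> P g" using P_mult_gpow[OF P_mult_R[OF assms(1) _ assms(3)]] q(1) by blast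
  qed
  finally show ?thesis .
qed

lemma P_subring: assumes "g \<in> ring_center" shows "is_subring (P g) UNIV"
proof (rule mk_subring)
  show "1 \<in> P g" by (rule P_R[OF R_one])
  show "x + y \<in> P g" if "x \<in> P g" "y \<in> P g" for x y using that by (rule P_add)
  show "x * y \<in> P g" if "x \<in> P g" "y \<in> P g" for x y using that assms by (rule P_mult)
  show "- x \<in> P g" if "x \<in> P g" for x using that by (rule P_uminus)
qed

lemma P_rep:
  assumes "g \<in> ring_center" "g \<notin> R"
  shows "\<exists>n r. (\<forall>i. r i \<in> R) \<and> x = (\<Sum>i<n. r i * g ^ i)"
proof -
  have "R \<subseteq> P g" using P_R by blast
  then have "P g = UNIV" by (rule grow[OF P_subring[OF assms(1)] _ P_g assms(2)])
  then have "x \<in> P g" by simp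
  then show ?thesis unfolding P_def by blast
qed

end



context msr
begin

lemma cent:
  assumes t: "t \<in> ring_center" "t \<notin> R" and x: "\<And>r. r \<in> R \<Longrightarrow> x * r = r * x"
  shows "x \<in> ring_center"
proof -
  let ?E = "{d. d * x = x * d}"
  have sub: "is_subring ?E UNIV"
  proof (rule mk_subring)
    show "1 \<in> ?E" by simp
    show "d + e \<in> ?E" if "d \<in> ?E" "e \<in> ?E" for d e using that by (simp add: distrib_left distrib_right)
    show "d * e \<in> ?E" if "d \<in> ?E" "e \<in> ?E" for d e
    proof -
      have "d * e * x = d * (x * e)" using that by (simp add: mult.assoc)
      also have "\<dots> = x * (d * e)" using that by (simp add: mult.assoc[symmetric])
      finally show ?thesis by simp
    qed
    show "- d \<in> ?E" if "d \<in> ?E" for d using that by simp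
  qed
  have "R \<subseteq> ?E" using x by auto
  moreover have "t \<in> ?E" using rc_comm[OF t(1), of x] by simp
  ultimately have "?E = UNIV" using grow[OF sub _ _ t(2)] by blast
  then have h: "y * x = x * y" for y by (metis (mono_tags, lifting) UNIV_I mem_Collect_eq)
  show ?thesis unfolding rc_iff using h by simp
qed

lemma caseA:
  assumes t: "t \<in> ring_center" "t \<notin> R" and ti: "inverse t \<in> R" and c: "c \<in> ring_center"
  shows "\<exists>r n. r \<in> R \<inter> ring_center \<and> c = r * t ^ n"
proof -
  have t0: "t \<noteq> 0" using t R_zero by auto
  have shift: "r * t ^ n = (r * inverse t ^ (m - n)) * t ^ m" if "n \<le> m" for r n m
  proof -
    have "t ^ m = t ^ (m - n) * t ^ n" using that by (simp add: power_add[symmetric])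
    then have "(r * inverse t ^ (m - n)) * t ^ m = r * (inverse (t ^ (m - n)) * t ^ (m - n)) * t ^ n"
      by (simp add: mult.assoc power_inverse)
    also have "\<dots> = r * t ^ n" using t0 by simp
    finally show ?thesis by simp
  qed
  let ?E = "{x. \<exists>r n. r \<in> R \<and> x = r * t ^ n}"
  have sub: "is_subring ?E UNIV"
  proof (rule mk_subring)
    have "(1::'a) = 1 * t ^ 0" by simp
    then show "1 \<in> ?E" using R_one by blast
    show "x + y \<in> ?E" if xE: "x \<in> ?E" and yE: "y \<in> ?E" for x y
    proof -
      obtain r n where rn: "r \<in> R" "x = r * t ^ n" using xE by blast
      obtain q m where qm: "q \<in> R" "y = q * t ^ m" using yE by blast
      show ?thesis
      proof (cases "n \<le> m")
        case True
        have "x + y = (r * inverse t ^ (m - n) + q) * t ^ m"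
          using rn qm shift[OF True, of r] by (simp add: distrib_right)
        moreover have "r * inverse t ^ (m - n) + q \<in> R" using rn qm ti R_add R_mult R_power by blast
        ultimately show ?thesis by blast
      next
        case False
        then have le: "m \<le> n" by simp
        have "x + y = (r + q * inverse t ^ (n - m)) * t ^ n"
          using rn qm shift[OF le, of q] by (simp add: distrib_right)
        moreover have "r + q * inverse t ^ (n - m) \<in> R" using rn qm ti R_add R_mult R_power by blast
        ultimately show ?thesis by blast
      qed
    qed
    show "x * y \<in> ?E" if xE: "x \<in> ?E" and yE: "y \<in> ?E" for x y
    proof -
      obtain r n where rn: "r \<in> R" "x = r * t ^ n" using xE by blast
      obtain q m where qm: "q \<in> R" "y = q * t ^ m" using yE by blast
      have h: "t ^ n * q = q * t ^ n" using rc_comm[OF rc_power[OF t(1)]] by blast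
      have "x * y = r * (t ^ n * q) * t ^ m" using rn qm by (simp add: mult.assoc)
      also have "\<dots> = (r * q) * t ^ (n + m)" unfolding h by (simp add: mult.assoc power_add)
      finally have "x * y = (r * q) * t ^ (n + m)" .
      moreover have "r * q \<in> R" using rn qm R_mult by blast
      ultimately show ?thesis by blast
    qed
    show "- x \<in> ?E" if xE: "x \<in> ?E" for x
    proof -
      obtain r n where rn: "r \<in> R" "x = r * t ^ n" using xE by blast
      have "- x = (- r) * t ^ n" using rn by simp
      moreover have "- r \<in> R" using rn R_uminus by blast
      ultimately show ?thesis by blast
    qed
  qed
  have "R \<subseteq> ?E"
  proof
    fix r assume "r \<in> R"
    moreover have "r = r * t ^ 0" by simp
    ultimately show "r \<in> ?E" by blast
  qed
  moreover have "t \<in> ?E"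
  proof -
    have "t = 1 * t ^ 1" by simp
    then show ?thesis using R_one by blast
  qed
  ultimately have "?E = UNIV" using grow[OF sub _ _ t(2)] by blast
  then obtain r n where rn: "r \<in> R" "c = r * t ^ n" by blast
  have "c * inverse t ^ n = r * (t ^ n * inverse (t ^ n))" using rn by (simp add: mult.assoc power_inverse)
  also have "\<dots> = r" using t0 by simp
  finally have "r = c * inverse t ^ n" by simp
  then have "r \<in> ring_center" using rc_mult[OF c rc_power[OF rc_inverse[OF t(1)]]] by simp
  then show ?thesis using rn by blast
qed

lemma star:
  assumes caseC: "\<And>u. u \<in> ring_center \<Longrightarrow> u \<notin> R \<Longrightarrow> inverse u \<notin> R"
    and a: "a \<in> R" "a \<noteq> 0" and g: "g \<in> ring_center" and ag: "a * g \<in> R"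
  shows "g \<in> R"
proof (rule ccontr)
  assume gR: "g \<notin> R"
  have g0: "g \<noteq> 0" using gR R_zero by auto
  let ?u = "inverse g"
  have uc: "?u \<in> ring_center" using rc_inverse[OF g] .
  have uR: "?u \<notin> R" using caseC[OF g gR] .
  obtain m q where q: "\<forall>i. q i \<in> R" "g = (\<Sum>j<m. q j * ?u ^ j)" using P_rep[OF uc uR, of g] by blast
  have m0: "m \<noteq> 0"
  proof
    assume "m = 0" then show False using q(2) g0 by simp
  qed
  then obtain k where mk: "m = Suc k" by (cases m) auto
  have rel: "g ^ m = (\<Sum>j<m. q j * g ^ (k - j))"
  proof -
    have "g ^ m = g * g ^ k" by (simp add: mk)
    also have "\<dots> = (\<Sum>j<m. q j * ?u ^ j) * g ^ k" using q(2) by (rule arg_cong[where f = "\<lambda>z. z * g ^ k"])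
    also have "\<dots> = (\<Sum>j<m. q j * (?u ^ j * g ^ k))" by (simp add: sum_distrib_right mult.assoc)
    also have "\<dots> = (\<Sum>j<m. q j * g ^ (k - j))"
    proof (rule sum.cong)
      fix j assume "j \<in> {..<m}"
      then have jk: "j \<le> k" using mk by simp
      have "g ^ k = g ^ j * g ^ (k - j)" using jk by (simp add: power_add[symmetric])
      then have "?u ^ j * g ^ k = (inverse (g ^ j) * g ^ j) * g ^ (k - j)"
        by (simp add: mult.assoc power_inverse)
      also have "\<dots> = g ^ (k - j)" using g0 by simp
      finally show "q j * (?u ^ j * g ^ k) = q j * g ^ (k - j)" by simp
    qed simp
    finally show ?thesis .
  qed
  define Q where "Q = {b. b \<in> R \<and> (\<forall>j<m. b * g ^ j \<in> R)}"
  have gjc: "\<And>j r. g ^ j * r = r * g ^ j" using rc_comm[OF rc_power[OF g]] by blast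
  have Q_right: "b * r \<in> Q" if "b \<in> Q" "r \<in> R" for b r
  proof -
    have "b * r * g ^ j \<in> R" if "j < m" for j
    proof -
      have "b * r * g ^ j = (b * g ^ j) * r" using gjc[of j r] by (simp add: mult.assoc)
      then show ?thesis using \<open>b \<in> Q\<close> \<open>r \<in> R\<close> that R_mult unfolding Q_def by auto
    qed
    then show ?thesis using that R_mult unfolding Q_def by auto
  qed
  have Q_add: "b + b' \<in> Q" if "b \<in> Q" "b' \<in> Q" for b b'
    using that R_add unfolding Q_def by (auto simp: distrib_right)
  have Q_neg: "- b \<in> Q" if "b \<in> Q" for b
    using that R_uminus unfolding Q_def by auto
  have Q_g: "b * g \<in> Q" if b: "b \<in> Q" for b
  proof -
    have suc: "b * g ^ Suc j \<in> R" if "j < m" for j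
    proof (cases "Suc j < m")
      case True then show ?thesis using b unfolding Q_def by blast
    next
      case False
      then have "Suc j = m" using that by simp
      then have "b * g ^ Suc j = (\<Sum>i<m. (b * q i) * g ^ (k - i))"
        using rel by (simp add: sum_distrib_left mult.assoc)
      also have "\<dots> \<in> R"
      proof (rule R_sum)
        fix i assume "i \<in> {..<m}"
        have "b * q i \<in> Q" using Q_right[OF b] q(1) by blast
        moreover have "k - i < m" using mk by simp
        ultimately show "b * q i * g ^ (k - i) \<in> R" unfolding Q_def by blast
      qed
      finally show ?thesis .
    qed
    have "b * g \<in> R" using suc[of 0] mk by simp
    moreover have "\<forall>j<m. b * g * g ^ j \<in> R" using suc by (simp add: mult.assoc)
    ultimately show ?thesis unfolding Q_def by blast
  qed
  define X where "X = {x. \<forall>b\<in>Q. b * x \<in> Q}"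
  have Xsub: "is_subring X UNIV"
  proof (rule mk_subring)
    show "1 \<in> X" unfolding X_def by simp
    show "x + y \<in> X" if "x \<in> X" "y \<in> X" for x y
      using that Q_add unfolding X_def by (simp add: distrib_left)
    show "x * y \<in> X" if "x \<in> X" "y \<in> X" for x y
      using that unfolding X_def by (simp add: mult.assoc[symmetric])
    show "- x \<in> X" if "x \<in> X" for x
      using that Q_neg unfolding X_def by simp
  qed
  have "R \<subseteq> X" using Q_right unfolding X_def by blast
  moreover have "g \<in> X" using Q_g unfolding X_def by blast
  ultimately have XU: "X = UNIV" using grow[OF Xsub _ _ gR] by blast
  let ?e = "a ^ m"
  have eQ: "?e \<in> Q"
  proof -
    have "a ^ m * g ^ j \<in> R" if "j < m" for j
    proof -
      have "a ^ m = a ^ (m - j) * a ^ j" using that by (simp add: power_add[symmetric])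
      then have "a ^ m * g ^ j = a ^ (m - j) * (a * g) ^ j" by (simp add: pow_central[OF g] mult.assoc)
      then show ?thesis using R_mult R_power a(1) ag by simp
    qed
    then show ?thesis using R_power a(1) unfolding Q_def by blast
  qed
  have e0: "?e \<noteq> 0" using a(2) by simp
  have "UNIV \<subseteq> R"
  proof
    fix y :: 'a
    have "inverse ?e * y \<in> X" using XU by simp
    then have "?e * (inverse ?e * y) \<in> Q" using eQ unfolding X_def by blast
    moreover have "?e * (inverse ?e * y) = y" using e0 by (simp add: mult.assoc[symmetric])
    ultimately show "y \<in> R" unfolding Q_def by simp
  qed
  then show False using RneU by blast
qed

end



context msr
begin

lemma L:
  fixes n :: nat
  assumes caseC: "\<And>u. u \<in> ring_center \<Longrightarrow> u \<notin> R \<Longrightarrow> inverse u \<notin> R"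
    and t: "t \<in> ring_center" "t \<notin> R"
  shows "\<forall>a c r f. a \<in> R \<longrightarrow> a \<noteq> 0 \<longrightarrow> c \<in> ring_center \<longrightarrow> (\<forall>i. r i \<in> R) \<longrightarrow>
     (\<forall>i. f i \<in> ring_center) \<longrightarrow> a * c = (\<Sum>i<n. r i * f i) \<longrightarrow>
     (\<exists>s. (\<forall>i. s i \<in> R \<inter> ring_center) \<and> c = (\<Sum>i<n. s i * f i))"
proof (induct n)
  case 0
  show ?case
  proof (intro allI impI)
    fix a c :: 'a and r f :: "nat \<Rightarrow> 'a"
    assume "a \<in> R" "a \<noteq> 0" "a * c = (\<Sum>i<0. r i * f i)"
    then have "c = 0" by simp
    moreover have "\<forall>i. (\<lambda>i. 0) i \<in> R \<inter> ring_center" using R_zero rc_zero by simp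
    ultimately show "\<exists>s. (\<forall>i. s i \<in> R \<inter> ring_center) \<and> c = (\<Sum>i<0. s i * f i)" by auto
  qed
next
  case (Suc n)
  show ?case
  proof (intro allI impI)
    fix a c :: 'a and r f :: "nat \<Rightarrow> 'a"
    assume a: "a \<in> R" "a \<noteq> 0" and c: "c \<in> ring_center" and r: "\<forall>i. r i \<in> R"
      and f: "\<forall>i. f i \<in> ring_center" and eq: "a * c = (\<Sum>i<Suc n. r i * f i)"
    have eq': "a * c = (\<Sum>i<n. r i * f i) + r n * f n" using eq by simp
    have fc: "\<And>i z. f i * z = z * f i"
    proof -
      fix i z have "f i \<in> ring_center" using f by blast
      then show "f i * z = z * f i" by (rule rc_comm)
    qed
    show "\<exists>s. (\<forall>i. s i \<in> R \<inter> ring_center) \<and> c = (\<Sum>i<Suc n. s i * f i)"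
    proof (cases "\<exists>y\<in>R. r n * y * a - a * y * r n \<noteq> 0")
      case True
      then obtain y where y: "y \<in> R" "r n * y * a - a * y * r n \<noteq> 0" by blast
      define b where "b = r n"
      define a' where "a' = b * y * a - a * y * b"
      define r' where "r' = (\<lambda>i. b * y * r i - r i * y * b)"
      have cyb: "c * (y * b) = y * (b * c)" using rc_comm[OF c, of "y * b"] by (simp add: mult.assoc)
      have "a' * c = b * y * (a * c) - (a * c) * (y * b)"
        by (simp add: a'_def left_diff_distrib mult.assoc cyb)
      also have "\<dots> = (\<Sum>i<Suc n. b * y * (r i * f i) - (r i * f i) * (y * b))"
        by (simp only: eq sum_distrib_left sum_distrib_right sum_subtractf)
      also have "\<dots> = (\<Sum>i<Suc n. r' i * f i)"
      proof (rule sum.cong)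
        fix i
        have "(r i * f i) * (y * b) = r i * y * b * f i" using fc[of i "y * b"] by (simp add: mult.assoc)
        then show "b * y * (r i * f i) - (r i * f i) * (y * b) = r' i * f i"
          by (simp add: r'_def left_diff_distrib mult.assoc)
      qed simp
      also have "\<dots> = (\<Sum>i<n. r' i * f i)" by (simp add: r'_def b_def)
      finally have eqa: "a' * c = (\<Sum>i<n. r' i * f i)" .
      have rn: "r n \<in> R" using r by blast
      have a'R: "a' \<in> R" unfolding a'_def b_def
        by (rule R_diff[OF R_mult[OF R_mult[OF rn y(1)] a(1)] R_mult[OF R_mult[OF a(1) y(1)] rn]])
      have a'0: "a' \<noteq> 0" unfolding a'_def b_def using y(2) .
      have r'R: "\<forall>i. r' i \<in> R"
      proof
        fix i have ri: "r i \<in> R" using r by blast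
        show "r' i \<in> R" unfolding r'_def b_def
          by (rule R_diff[OF R_mult[OF R_mult[OF rn y(1)] ri] R_mult[OF R_mult[OF ri y(1)] rn]])
      qed
      note H = Suc.hyps[THEN spec[of _ a'], THEN spec[of _ c], THEN spec[of _ r'], THEN spec[of _ f]]
      have "\<exists>s. (\<forall>i. s i \<in> R \<inter> ring_center) \<and> c = (\<Sum>i<n. s i * f i)"
        using H a'R a'0 c r'R f eqa by blast
      then obtain s where s: "\<forall>i. s i \<in> R \<inter> ring_center" "c = (\<Sum>i<n. s i * f i)" by blast
      let ?s = "\<lambda>i. if i < n then s i else 0"
      have e1: "c + 0 * f n = (\<Sum>i<Suc n. ?s i * f i)" by (rule ext_sum[OF s(2)])
      have ceq: "c = (\<Sum>i<Suc n. ?s i * f i)" using e1 by (simp only: mult_zero_left add_0_right)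
      have mem: "\<forall>i. ?s i \<in> R \<inter> ring_center"
      proof
        fix i
        have z: "(0::'a) \<in> R \<inter> ring_center" using R_zero rc_zero by blast
        show "?s i \<in> R \<inter> ring_center" using s(1) z by (cases "i < n") auto
      qed
      show ?thesis by (rule exI[of _ ?s]) (rule conjI[OF mem ceq])
    next
      case False
      then have comm: "\<And>y. y \<in> R \<Longrightarrow> r n * y * a = a * y * r n" by auto
      define g where "g = inverse a * r n"
      have ag: "a * g = r n" using a(2) by (simp add: g_def mult.assoc[symmetric])
      have ga: "g * a = a * g"
      proof -
        have "r n * a = a * r n" using comm[OF R_one] by simp
        then have "a * (g * a) = a * (a * g)" using ag by (simp add: mult.assoc[symmetric])
        then show ?thesis using a(2) by simp
      qed
      have gcomm: "g * y = y * g" if y: "y \<in> R" for y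
      proof -
        have "a * (g * y * a) = r n * y * a" using ag by (simp add: mult.assoc[symmetric])
        also have "\<dots> = a * y * r n" using comm[OF y] .
        also have "\<dots> = a * (y * a * g)" using ag by (simp add: mult.assoc)
        finally have "a * (g * y * a) = a * (y * a * g)" .
        then have "g * y * a = y * a * g" using a(2) by simp
        also have "\<dots> = y * g * a" using ga by (simp add: mult.assoc)
        finally show ?thesis using a(2) by simp
      qed
      have gc: "g \<in> ring_center" using cent[OF t gcomm] by blast
      have gR: "g \<in> R" using star[OF caseC a gc] ag r by simp
      have "a * (c - g * f n) = a * c - r n * f n" using ag by (simp add: right_diff_distrib mult.assoc[symmetric])
      also have "\<dots> = (\<Sum>i<n. r i * f i)" using eq' by simp
      finally have eqa: "a * (c - g * f n) = (\<Sum>i<n. r i * f i)" .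
      have cc: "c - g * f n \<in> ring_center" using rc_diff[OF c rc_mult[OF gc]] f by blast
      note H = Suc.hyps[THEN spec[of _ a], THEN spec[of _ "c - g * f n"], THEN spec[of _ r], THEN spec[of _ f]]
      have "\<exists>s. (\<forall>i. s i \<in> R \<inter> ring_center) \<and> c - g * f n = (\<Sum>i<n. s i * f i)"
        using H a cc r f eqa by blast
      then obtain s where s: "\<forall>i. s i \<in> R \<inter> ring_center" "c - g * f n = (\<Sum>i<n. s i * f i)" by blast
      let ?s = "\<lambda>i. if i < n then s i else g"
      have e1: "(c - g * f n) + g * f n = (\<Sum>i<Suc n. ?s i * f i)" by (rule ext_sum[OF s(2)])
      have ceq: "c = (\<Sum>i<Suc n. ?s i * f i)" using e1 by (simp only: diff_add_cancel)
      have mem: "\<forall>i. ?s i \<in> R \<inter> ring_center"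
      proof
        fix i show "?s i \<in> R \<inter> ring_center" using s(1) gR gc by (cases "i < n") auto
      qed
      show ?thesis by (rule exI[of _ ?s]) (rule conjI[OF mem ceq])
    qed
  qed
qed

end

theorem corollary2p8:
  fixes R :: "'a::division_ring set"
  assumes "\<not> (\<exists>S. maximal_subring S (ring_center :: 'a set))"
    and "\<exists>x y :: 'a. x * y \<noteq> y * x"
    and "maximal_subring R (UNIV :: 'a set)"
  shows "(ring_center :: 'a set) \<subseteq> R"
proof (rule ccontr)
  assume "\<not> (ring_center :: 'a set) \<subseteq> R"
  then obtain t :: 'a where t: "t \<in> ring_center" "t \<notin> R" by blast
  interpret msr R using assms(3) by unfold_locales
  let ?S = "R \<inter> (ring_center :: 'a set)"
  have Ssub: "is_subring ?S ring_center"
    unfolding is_subring_def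
  proof (intro conjI ballI)
    show "?S \<subseteq> ring_center" by blast
    show "1 \<in> ?S" using R_one rc_one by blast
  next
    fix x y assume x: "x \<in> ?S" and y: "y \<in> ?S"
    show "x + y \<in> ?S" using R_add[of x y] rc_add[of x y] x y by blast
    show "x * y \<in> ?S" using R_mult[of x y] rc_mult[of x y] x y by blast
  next
    fix x assume x: "x \<in> ?S"
    show "- x \<in> ?S" using R_uminus[of x] rc_uminus[of x] x by blast
  qed
  have "\<exists>u. u \<in> ring_center \<and> u \<notin> ?S \<and>
      (\<forall>W. is_subring W ring_center \<longrightarrow> ?S \<subseteq> W \<longrightarrow> u \<in> W \<longrightarrow> W = ring_center)"
  proof (cases "\<exists>u. u \<in> ring_center \<and> u \<notin> R \<and> inverse u \<in> R")
    case True
    then obtain u where u: "u \<in> ring_center" "u \<notin> R" "inverse u \<in> R" by blast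
    have "W = ring_center" if W: "is_subring W ring_center" "?S \<subseteq> W" "u \<in> W" for W
    proof
      show "W \<subseteq> ring_center" using subringD(1)[OF W(1)] .
      show "ring_center \<subseteq> W"
      proof
        fix c :: 'a assume c: "c \<in> ring_center"
        obtain r n where rn: "r \<in> ?S" "c = r * u ^ n" using caseA[OF u c] by blast
        have "r \<in> W" using rn W(2) by blast
        moreover have "u ^ n \<in> W" using subring_power[OF W(1) W(3)] .
        ultimately show "c \<in> W" using rn subringD(4)[OF W(1)] by simp
      qed
    qed
    then show ?thesis using u by blast
  next
    case False
    then have caseC: "\<And>v. v \<in> ring_center \<Longrightarrow> v \<notin> R \<Longrightarrow> inverse v \<notin> R" by blast
    have "W = ring_center" if W: "is_subring W ring_center" "?S \<subseteq> W" "t \<in> W" for W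
    proof
      show "W \<subseteq> ring_center" using subringD(1)[OF W(1)] .
      show "ring_center \<subseteq> W"
      proof
        fix c :: 'a assume c: "c \<in> ring_center"
        obtain n r where r: "\<forall>i. r i \<in> R" "c = (\<Sum>i<n. r i * t ^ i)" using P_rep[OF t, of c] by blast
        have "\<forall>i. t ^ i \<in> ring_center" using rc_power[OF t(1)] by blast
        moreover have "1 * c = (\<Sum>i<n. r i * t ^ i)" using r(2) by simp
        moreover note L[OF caseC t, of n, THEN spec[of _ 1], THEN spec[of _ c], THEN spec[of _ r],
          THEN spec[of _ "\<lambda>i. t ^ i"]]
        ultimately have "\<exists>s. (\<forall>i. s i \<in> ?S) \<and> c = (\<Sum>i<n. s i * t ^ i)"
          using R_one c r(1) by simp
        then obtain s where s: "\<forall>i. s i \<in> ?S" "c = (\<Sum>i<n. s i * t ^ i)" by blast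
        have "(\<Sum>i<n. s i * t ^ i) \<in> W"
        proof (rule subring_sum[OF W(1)])
          fix i
          have "s i \<in> W" using s(1) W(2) by blast
          then show "s i * t ^ i \<in> W" using subringD(4)[OF W(1)] subring_power[OF W(1) W(3)] by blast
        qed
        then show "c \<in> W" using s(2) by simp
      qed
    qed
    then show ?thesis using t by blast
  qed
  then obtain u where u: "u \<in> ring_center" "u \<notin> ?S"
    and gen: "\<And>W. is_subring W ring_center \<Longrightarrow> ?S \<subseteq> W \<Longrightarrow> u \<in> W \<Longrightarrow> W = ring_center" by blast
  obtain M where "maximal_subring M (ring_center :: 'a set)" using zorn_max[OF Ssub u gen] by blast
  then show False using assms(1) by blast
qed


end
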